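(* For every type vector $\kappa$: (1) If $\mathbb{E}[f(x)]<c$, then $G_{IC}(\kappa)=G^*_{IC}(\kappa)=\{\varnothing\}$. (2) If $\mathbb{E}[f(x)]\ge c$, then $G_{IC}(\kappa)\supseteq G_C(\kappa)$ and $G^*_{IC}(\kappa)\supseteq G^*_C(\kappa)$.
   Context: Model. There are $N\ge 2$ agents $I=\{1,\dots,N\}$. Each agent $i$ has a private type $k_i\in X$; types are drawn i.i.d. from a prior distribution $H$ on $X$, and $\kappa=(k_1,\dots,k_N)$ is the type vector. There is a function $f:X\to\mathbb{R}_{>0}$, a link cost $c>0$ and a decay factor $\delta\in(0,1)$; $\mathbb{E}[f(x)]=\int_X f\,dH$ is assumed well defined. A network ${\bf g}$ is a set of unordered pairs $ij$ ($i\neq j$), called links. Agents $i,j$ are connected in ${\bf g}$ if there is a path of links between them; $d_{ij}$ is the length of a shortest such path ($\infty$ if not connected); $C_i$ denotes the component of ${\bf g}$ containing $i$. Agent $i$'s payoff is $u_i({\bf g})=\sum_{j\neq i,\ j\text{ connected to }i}\delta^{d_{ij}-1}f(k_j)-c\cdot\#\{j: ij\in{\bf g}\}$. Dynamics. The network is empty at $t=0$. In each period $t\ge1$ one unordered pair $(i,j)$ is selected; the sequence of selected pairs up to $t$ is the selection path $\gamma(t)$. The selected agents observe each other's components and simultaneously choose $a_{ij},a_{ji}\in\{0,1\}$ (1 = agree to form the link if absent / keep it if present, 0 = refuse / sever); after the period the link $ij$ is present iff $a_{ij}=a_{ji}=1$. Agents are myopic and play the stable optimistic equilibrium (SOE):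 agent $i$ chooses $1$ iff his expected current payoff (w.r.t. his belief) from the network resulting with the link $ij$ is at least his current payoff without it. Information. Under complete information every agent knows $\kappa$. Under incomplete information (simple updating rule), if $i$ and $j$ have ever been connected at some period so far, each knows the other's type; otherwise each one's belief about the other's type is the prior $H$. Emergence and stability. Given a selection path $\gamma(t)$, the resulting network ${\bf g}(\gamma(t))$ and beliefs $B(\gamma(t))$ are uniquely determined. A network ${\bf g}$ can emerge if ${\bf g}={\bf g}(\gamma(t))$ for some selection path $\gamma(t)$. A pair $({\bf g},B)$ is stable if no link is formed or severed along any subsequent selection path. The process can converge to ${\bf g}$ if for some selection path $\gamma(t)$, ${\bf g}={\bf g}(\gamma(t))$ and $({\bf g}(\gamma(t)),B(\gamma(t)))$ is stable. $G_C(\kappa)$ (resp. $G_{IC}(\kappa)$) is the set of networks that can emerge under complete (resp. incomplete) information, and $G^*_C(\kappa)$ (resp. $G^*_{IC}(\kappa)$) the set of networks to which the process can converge under complete (resp. incomplete) information. *)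

theory Defs
  imports "HOL-Probability.Probability"
begin

text \<open>Agents are the natural numbers 0..N-1. A network is a set of links, each
link being a two-element set {i,j} with i \<noteq> j. A type vector is a function
kappa :: nat \<Rightarrow> 'x (only the values at agents 0..N-1 matter).\<close>

type_synonym network = "nat set set"

inductive reach :: "network \<Rightarrow> nat \<Rightarrow> nat \<Rightarrow> nat \<Rightarrow> bool" where
  reach_refl: "reach g i i 0"
| reach_step: "reach g i k n \<Longrightarrow> {k, j} \<in> g \<Longrightarrow> reach g i j (Suc n)"

definition net_connected :: "network \<Rightarrow> nat \<Rightarrow> nat \<Rightarrow> bool" where
  "net_connected g i j \<longleftrightarrow> (\<exists>n. reach g i j n)"

text \<open>Length of a shortest path (only used for net_connected pairs).\<close>
definition net_dist :: "network \<Rightarrow> nat \<Rightarrow> nat \<Rightarrow> nat" where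
  "net_dist g i j = (LEAST n. reach g i j n)"

definition net_degree :: "nat \<Rightarrow> network \<Rightarrow> nat \<Rightarrow> nat" where
  "net_degree N g i = card {j. j < N \<and> {i, j} \<in> g}"

text \<open>Belief of agent i about agent j's value of f: the true value if types are
known (ci information, or i and j have been net_connected at some period,
recorded in the set K of known pairs), otherwise the prior mean E.\<close>
definition belief_val ::
  "bool \<Rightarrow> ('x \<Rightarrow> real) \<Rightarrow> real \<Rightarrow> (nat \<Rightarrow> 'x) \<Rightarrow> nat set set \<Rightarrow> nat \<Rightarrow> nat \<Rightarrow> real" where
  "belief_val ci f E kappa K i j =
     (if ci \<or> {i, j} \<in> K then f (kappa j) else E)"

definition exp_payoff ::
  "bool \<Rightarrow> nat \<Rightarrow> ('x \<Rightarrow> real) \<Rightarrow> real \<Rightarrow> real \<Rightarrow> real \<Rightarrow> (nat \<Rightarrow> 'x) \<Rightarrow>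
   nat set set \<Rightarrow> network \<Rightarrow> nat \<Rightarrow> real" where
  "exp_payoff ci N f c \<delta> E kappa K g i =
     (\<Sum>j\<in>{j. j < N \<and> j \<noteq> i \<and> net_connected g i j}.
        \<delta> ^ (net_dist g i j - 1) * belief_val ci f E kappa K i j)
     - c * real (net_degree N g i)"

definition conn_pairs :: "nat \<Rightarrow> network \<Rightarrow> nat set set" where
  "conn_pairs N g = {{a, b} | a b. a < N \<and> b < N \<and> a \<noteq> b \<and> net_connected g a b}"

text \<open>One period: pair (i,j) selected, myopic net_stable optimistic equilibrium
decisions, then simple belief updating.\<close>
definition step ::
  "bool \<Rightarrow> nat \<Rightarrow> ('x \<Rightarrow> real) \<Rightarrow> real \<Rightarrow> real \<Rightarrow> real \<Rightarrow> (nat \<Rightarrow> 'x) \<Rightarrow>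
   network \<times> nat set set \<Rightarrow> nat \<times> nat \<Rightarrow> network \<times> nat set set" where
  "step ci N f c \<delta> E kappa st p =
     (let g = fst st; K = snd st; i = fst p; j = snd p;
          gp = g \<union> {{i, j}}; gm = g - {{i, j}};
          ai = (exp_payoff ci N f c \<delta> E kappa K gp i \<ge> exp_payoff ci N f c \<delta> E kappa K gm i);
          aj = (exp_payoff ci N f c \<delta> E kappa K gp j \<ge> exp_payoff ci N f c \<delta> E kappa K gm j);
          g' = (if ai \<and> aj then gp else gm)
      in (g', K \<union> conn_pairs N g'))"

definition run_from ::
  "bool \<Rightarrow> nat \<Rightarrow> ('x \<Rightarrow> real) \<Rightarrow> real \<Rightarrow> real \<Rightarrow> real \<Rightarrow> (nat \<Rightarrow> 'x) \<Rightarrow>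
   network \<times> nat set set \<Rightarrow> (nat \<times> nat) list \<Rightarrow> network \<times> nat set set" where
  "run_from ci N f c \<delta> E kappa st \<gamma> = foldl (step ci N f c \<delta> E kappa) st \<gamma>"

definition run ::
  "bool \<Rightarrow> nat \<Rightarrow> ('x \<Rightarrow> real) \<Rightarrow> real \<Rightarrow> real \<Rightarrow> real \<Rightarrow> (nat \<Rightarrow> 'x) \<Rightarrow>
   (nat \<times> nat) list \<Rightarrow> network \<times> nat set set" where
  "run ci N f c \<delta> E kappa \<gamma> = run_from ci N f c \<delta> E kappa ({}, {}) \<gamma>"

definition valid_path :: "nat \<Rightarrow> (nat \<times> nat) list \<Rightarrow> bool" where
  "valid_path N \<gamma> \<longleftrightarrow> (\<forall>p\<in>set \<gamma>. fst p < N \<and> snd p < N \<and> fst p \<noteq> snd p)"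

text \<open>(g,B) is net_stable: no link is formed or severed along any subsequent
selection path (checking the final network of every path covers every prefix).\<close>
definition net_stable ::
  "bool \<Rightarrow> nat \<Rightarrow> ('x \<Rightarrow> real) \<Rightarrow> real \<Rightarrow> real \<Rightarrow> real \<Rightarrow> (nat \<Rightarrow> 'x) \<Rightarrow>
   network \<times> nat set set \<Rightarrow> bool" where
  "net_stable ci N f c \<delta> E kappa st \<longleftrightarrow>
     (\<forall>\<gamma>. valid_path N \<gamma> \<longrightarrow> fst (run_from ci N f c \<delta> E kappa st \<gamma>) = fst st)"

text \<open>Networks that can emerge (G_C for ci = True, G_IC for ci = False).\<close>
definition emerge ::
  "bool \<Rightarrow> nat \<Rightarrow> ('x \<Rightarrow> real) \<Rightarrow> real \<Rightarrow> real \<Rightarrow> real \<Rightarrow> (nat \<Rightarrow> 'x) \<Rightarrow> network set" where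
  "emerge ci N f c \<delta> E kappa =
     {fst (run ci N f c \<delta> E kappa \<gamma>) | \<gamma>. valid_path N \<gamma>}"

definition converge ::
  "bool \<Rightarrow> nat \<Rightarrow> ('x \<Rightarrow> real) \<Rightarrow> real \<Rightarrow> real \<Rightarrow> real \<Rightarrow> (nat \<Rightarrow> 'x) \<Rightarrow> network set" where
  "converge ci N f c \<delta> E kappa =
     {fst (run ci N f c \<delta> E kappa \<gamma>) | \<gamma>. valid_path N \<gamma> \<and>
        net_stable ci N f c \<delta> E kappa (run ci N f c \<delta> E kappa \<gamma>)}"

end

theory Submission
  imports Defs
begin

lemma reach_mono: "reach g a b n \<Longrightarrow> g \<subseteq> g' \<Longrightarrow> reach g' a b n"
  by (induction rule: reach.induct) (auto intro: reach.intros)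

lemma reach_0: "reach g a b 0 \<longleftrightarrow> a = b"
  by (auto elim: reach.cases intro: reach.intros)

lemma reach_trans: "reach g b x m \<Longrightarrow> reach g a b n \<Longrightarrow> reach g a x (n+m)"
  by (induction rule: reach.induct) (auto intro: reach.intros)

lemma reach_empty0: "reach G a b n \<Longrightarrow> G = {} \<Longrightarrow> a = b"
  by (induction rule: reach.induct) auto

lemma reach_empty: "reach {} a b n \<Longrightarrow> a = b"
  using reach_empty0 by blast

lemma reach_link: "reach g a x n \<Longrightarrow> x = a \<or> (\<exists>e\<in>g. a \<in> e)"
  by (induction rule: reach.induct) auto

lemma reach_last: "reach g a x n \<Longrightarrow> x \<noteq> a \<Longrightarrow> \<exists>e\<in>g. x \<in> e"
  by (cases rule: reach.cases) auto

lemma conn_step: "net_connected g a k \<Longrightarrow> {k,x} \<in> g \<Longrightarrow> net_connected g a x"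
  unfolding net_connected_def by (auto intro: reach.intros)

lemma conn_refl: "net_connected g a a"
  unfolding net_connected_def by (auto intro: reach.intros)

lemma conn_trans: "net_connected g a b \<Longrightarrow> net_connected g b x \<Longrightarrow> net_connected g a x"
  unfolding net_connected_def using reach_trans by blast

lemma conn_mono: "net_connected g a b \<Longrightarrow> g \<subseteq> g' \<Longrightarrow> net_connected g' a b"
  unfolding net_connected_def using reach_mono by blast

lemma reach_split0:
  "reach G a x n \<Longrightarrow> G = g \<union> {{i,j}} \<Longrightarrow> net_connected (g - {{i,j}}) a x \<or>
     net_connected (g - {{i,j}}) i x \<or> net_connected (g - {{i,j}}) j x"
proof (induction rule: reach.induct)
  case (reach_refl G a)
  then show ?case using conn_refl by blast
next
  case (reach_step G a k n x)
  show ?case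
  proof (cases "{k,x} \<in> g - {{i,j}}")
    case True
    then show ?thesis using reach_step.IH reach_step.prems conn_step by blast
  next
    case False
    then have "{k,x} = {i,j}" using reach_step.hyps(2) reach_step.prems by auto
    then have "x = i \<or> x = j" by (auto simp: doubleton_eq_iff)
    then show ?thesis using conn_refl by blast
  qed
qed

lemma reach_split:
  "reach (g \<union> {{i,j}}) a x n \<Longrightarrow> net_connected (g - {{i,j}}) a x \<or>
     net_connected (g - {{i,j}}) i x \<or> net_connected (g - {{i,j}}) j x"
  using reach_split0 by blast

lemma reach_pendant:
  assumes iso: "\<forall>e\<in>g. j \<notin> e"
  shows "reach G a x n \<Longrightarrow> G = g \<union> {{i,j}} \<Longrightarrow> a \<noteq> j \<Longrightarrow>
     (x \<noteq> j \<longrightarrow> (\<exists>n'\<le>n. reach g a x n')) \<and> (x = j \<longrightarrow> (\<exists>n'<n. reach g a i n'))"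
proof (induction rule: reach.induct)
  case (reach_refl G a)
  then show ?case by (auto intro: reach.intros)
next
  case (reach_step G a k n x)
  show ?case
  proof (cases "k = j")
    case True
    then obtain n' where n': "n' < n" "reach g a i n'" using reach_step.IH reach_step.prems by auto
    have "{j,x} \<notin> g" using iso by auto
    then have "{j,x} = {i,j}" using reach_step.hyps(2) reach_step.prems True by auto
    then have "x = i \<or> x = j" by (auto simp: doubleton_eq_iff)
    then show ?thesis using n' by (metis less_SucI less_imp_le_nat)
  next
    case False
    then obtain n' where n': "n' \<le> n" "reach g a k n'" using reach_step.IH reach_step.prems by auto
    show ?thesis
    proof (cases "x = j")
      case True
      have "{k,j} \<notin> g" using iso by auto
      then have "{k,j} = {i,j}" using reach_step.hyps(2) reach_step.prems True by auto
      then have "k = i" using False by (auto simp: doubleton_eq_iff)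
      then show ?thesis using n' True by (metis le_imp_less_Suc)
    next
      case xj: False
      have "{k,x} \<in> g" using reach_step.hyps(2) reach_step.prems False xj by auto
      then have "reach g a x (Suc n')" using n' reach.reach_step by blast
      then show ?thesis using xj n' by auto
    qed
  qed
qed

lemma dist_reach: "net_connected g a b \<Longrightarrow> reach g a b (net_dist g a b)"
  unfolding net_connected_def net_dist_def by (rule LeastI_ex)

lemma dist_le: "reach g a b n \<Longrightarrow> net_dist g a b \<le> n"
  unfolding net_dist_def by (rule Least_le)

lemma dist_mono: "net_connected g a b \<Longrightarrow> g \<subseteq> G \<Longrightarrow> net_dist G a b \<le> net_dist g a b"
  using dist_reach dist_le reach_mono by blast

lemma dist_1: "{a,b} \<in> G \<Longrightarrow> a \<noteq> b \<Longrightarrow> net_dist G a b = 1"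
  unfolding net_dist_def
proof (rule Least_equality)
  assume "{a,b} \<in> G"
  then show "reach G a b 1" using reach.reach_step[OF reach.reach_refl] by fastforce
next
  fix y assume "a \<noteq> b" "reach G a b y"
  then show "1 \<le> y" using reach_0 by (cases y) auto
qed

lemma conn_pairs_mono: "g \<subseteq> G \<Longrightarrow> conn_pairs N g \<subseteq> conn_pairs N G"
  unfolding conn_pairs_def using conn_mono by blast

lemma conn_pairs_empty: "conn_pairs N {} = {}"
  unfolding conn_pairs_def net_connected_def using reach_empty by blast


locale netw =
  fixes N :: nat and f :: "'x \<Rightarrow> real" and c \<delta> E :: real and kappa :: "nat \<Rightarrow> 'x"
  assumes fpos: "\<And>m. m < N \<Longrightarrow> 0 < f (kappa m)"
    and cpos: "0 < c" and dpos: "0 < \<delta>" and dle: "\<delta> \<le> 1"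
begin

definition pay :: "bool \<Rightarrow> nat set set \<Rightarrow> network \<Rightarrow> nat \<Rightarrow> real" where
  "pay ci K G a = exp_payoff ci N f c \<delta> E kappa K G a"

definition acc :: "bool \<Rightarrow> nat set set \<Rightarrow> network \<Rightarrow> nat \<Rightarrow> nat \<Rightarrow> bool" where
  "acc ci K g a b \<longleftrightarrow> pay ci K (g - {{a,b}}) a \<le> pay ci K (g \<union> {{a,b}}) a"

definition good :: "network \<Rightarrow> bool" where
  "good g \<longleftrightarrow> (\<forall>e\<in>g. \<forall>x\<in>e. c \<le> f (kappa x))"

definition informed :: "nat set set \<Rightarrow> network \<Rightarrow> nat \<Rightarrow> bool" where
  "informed K G a \<longleftrightarrow> (\<forall>m. m < N \<longrightarrow> m \<noteq> a \<longrightarrow> net_connected G a m \<longrightarrow> {a,m} \<in> K)"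

lemma pendant_pay:
  assumes iso: "\<forall>e\<in>g. j \<notin> e" and ij: "i \<noteq> j" "i < N" "j < N"
  shows "pay ci K (g \<union> {{i,j}}) i = pay ci K g i + belief_val ci f E kappa K i j - c"
proof -
  let ?G = "g \<union> {{i,j}}"
  let ?b = "\<lambda>m. belief_val ci f E kappa K i m"
  define S where "S = {m. m < N \<and> m \<noteq> i \<and> net_connected g i m}"
  define SG where "SG = {m. m < N \<and> m \<noteq> i \<and> net_connected ?G i m}"
  have jS: "j \<notin> S"
  proof
    assume "j \<in> S"
    then obtain n where "reach g i j n" unfolding S_def net_connected_def by auto
    then show False using reach_last ij iso by blast
  qed
  have SG: "SG = insert j S"
  proof
    show "SG \<subseteq> insert j S"
    proof
      fix m assume m: "m \<in> SG"
      show "m \<in> insert j S"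
      proof (cases "m = j")
        case False
        from m obtain n where "reach ?G i m n" unfolding SG_def net_connected_def by auto
        then obtain n' where "reach g i m n'" using reach_pendant[OF iso, of ?G i m n i] ij False by auto
        then show ?thesis using m unfolding SG_def S_def net_connected_def by auto
      qed simp
    qed
  next
    have "net_connected ?G i j" using conn_step[OF conn_refl, of i j ?G] by auto
    then show "insert j S \<subseteq> SG" unfolding SG_def S_def using ij conn_mono[of g i _ ?G] by auto
  qed
  have dist: "net_dist ?G i m = net_dist g i m" if "m \<in> S" for m
  proof (rule antisym)
    have c1: "net_connected g i m" using that unfolding S_def by auto
    then show "net_dist ?G i m \<le> net_dist g i m" using dist_mono by blast
    have "net_connected ?G i m" using c1 conn_mono by blast
    then have "reach ?G i m (net_dist ?G i m)" by (rule dist_reach)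
    moreover have "m \<noteq> j" using that jS by auto
    ultimately obtain n' where "n' \<le> net_dist ?G i m" "reach g i m n'"
      using reach_pendant[OF iso, of ?G i m _ i] ij by auto
    then show "net_dist g i m \<le> net_dist ?G i m" using dist_le order_trans by blast
  qed
  have dj: "net_dist ?G i j = 1" using dist_1[of i j ?G] ij by auto
  define D where "D = {m. m < N \<and> {i,m} \<in> g}"
  have DG: "{m. m < N \<and> {i,m} \<in> ?G} = insert j D"
    unfolding D_def using ij by (auto simp: doubleton_eq_iff)
  have jD: "j \<notin> D" unfolding D_def using iso by auto
  have fD: "finite D" unfolding D_def by auto
  have fS: "finite S" unfolding S_def by auto
  have sumeq: "(\<Sum>m\<in>SG. \<delta> ^ (net_dist ?G i m - 1) * ?b m) = ?b j + (\<Sum>m\<in>S. \<delta> ^ (net_dist g i m - 1) * ?b m)"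
    unfolding SG using fS jS dj dist by (simp add: sum.insert)
  have "pay ci K ?G i = (\<Sum>m\<in>SG. \<delta> ^ (net_dist ?G i m - 1) * ?b m) - c * real (card (insert j D))"
    unfolding pay_def exp_payoff_def net_degree_def SG_def DG[symmetric] by simp
  also have "\<dots> = ?b j + (\<Sum>m\<in>S. \<delta> ^ (net_dist g i m - 1) * ?b m) - c * real (card D) - c"
    using sumeq fD jD by (simp add: algebra_simps)
  also have "\<dots> = pay ci K g i + ?b j - c"
    unfolding pay_def exp_payoff_def net_degree_def S_def D_def by simp
  finally show ?thesis .
qed


lemma good_mono: "H \<subseteq> g \<Longrightarrow> good g \<Longrightarrow> good H"
  unfolding good_def by blast

lemma informed_mono: "K \<subseteq> K' \<Longrightarrow> informed K G a \<Longrightarrow> informed K' G a"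
  unfolding informed_def by blast

lemma informed_conn: "conn_pairs N G \<subseteq> K \<Longrightarrow> a < N \<Longrightarrow> informed K G a"
  unfolding informed_def conn_pairs_def by blast

lemma pay_True_indep: "pay True K G a = pay True K' G a"
  unfolding pay_def exp_payoff_def belief_val_def by simp

lemma pay_inf:
  assumes "informed K G a" "H \<subseteq> G"
  shows "pay False K H a = pay True K' H a"
  unfolding pay_def exp_payoff_def
proof (intro arg_cong2[where f = "(-)"] refl sum.cong)
  fix m assume "m \<in> {j. j < N \<and> j \<noteq> a \<and> net_connected H a j}"
  then have "{a,m} \<in> K" using assms conn_mono unfolding informed_def by blast
  then show "\<delta> ^ (net_dist H a m - 1) * belief_val False f E kappa K a m =
         \<delta> ^ (net_dist H a m - 1) * belief_val True f E kappa K' a m"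
    unfolding belief_val_def by simp
qed

lemma H_lb:
  assumes cp: "conn_pairs N (g - {{i,j}}) \<subseteq> K" and gd: "good (g - {{i,j}})" and Ec: "c \<le> E"
    and ij: "i \<noteq> j" "i < N" "j < N" and ni: "\<not> informed K (g \<union> {{i,j}}) i"
  shows "pay False K (g - {{i,j}}) i \<le> pay False K (g \<union> {{i,j}}) i"
proof -
  let ?G = "g \<union> {{i,j}}"
  let ?M = "g - {{i,j}}"
  let ?b = "\<lambda>m. belief_val False f E kappa K i m"
  obtain m where m: "m < N" "m \<noteq> i" "net_connected ?G i m" "{i,m} \<notin> K"
    using ni unfolding informed_def by blast
  have nMim: "\<not> net_connected ?M i m"
  proof
    assume "net_connected ?M i m"
    then have "{i,m} \<in> conn_pairs N ?M" unfolding conn_pairs_def using m ij by blast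
    then show False using cp m by blast
  qed
  obtain n where "reach ?G i m n" using m unfolding net_connected_def by blast
  then have Mjm: "net_connected ?M j m" using reach_split nMim by blast
  have nMij: "\<not> net_connected ?M i j" using nMim Mjm conn_trans by blast
  have bc: "c \<le> ?b j"
  proof (cases "{i,j} \<in> K")
    case True
    then have "m \<noteq> j" using m by auto
    obtain n where "reach ?M j m n" using Mjm unfolding net_connected_def by blast
    then obtain e where "e \<in> ?M" "j \<in> e" using reach_link \<open>m \<noteq> j\<close> by blast
    then have "c \<le> f (kappa j)" using gd unfolding good_def by blast
    then show ?thesis using True unfolding belief_val_def by simp
  next
    case False
    then show ?thesis using Ec unfolding belief_val_def by simp
  qed
  have bpos: "0 \<le> ?b x" if "x < N" for x
    using fpos[OF that] Ec cpos unfolding belief_val_def by simp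
  define SM where "SM = {m. m < N \<and> m \<noteq> i \<and> net_connected ?M i m}"
  define SG where "SG = {m. m < N \<and> m \<noteq> i \<and> net_connected ?G i m}"
  have sub: "insert j SM \<subseteq> SG"
  proof -
    have "net_connected ?G i j" using conn_step[OF conn_refl, of i j ?G] by auto
    moreover have "?M \<subseteq> ?G" by auto
    ultimately show ?thesis unfolding SG_def SM_def using ij conn_mono[of ?M i _ ?G] by auto
  qed
  have jSM: "j \<notin> SM" unfolding SM_def using nMij by auto
  have fSG: "finite SG" unfolding SG_def by auto
  have fSM: "finite SM" unfolding SM_def by auto
  let ?tG = "\<lambda>x. \<delta> ^ (net_dist ?G i x - 1) * ?b x"
  let ?tM = "\<lambda>x. \<delta> ^ (net_dist ?M i x - 1) * ?b x"
  have s1: "(\<Sum>x\<in>insert j SM. ?tG x) \<le> (\<Sum>x\<in>SG. ?tG x)"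
    by (rule sum_mono2[OF fSG sub]) (use bpos dpos in \<open>auto simp: SG_def\<close>)
  have s2: "(\<Sum>x\<in>insert j SM. ?tG x) = ?b j + (\<Sum>x\<in>SM. ?tG x)"
    using fSM jSM dist_1[of i j ?G] ij by (simp add: sum.insert)
  have s3: "(\<Sum>x\<in>SM. ?tM x) \<le> (\<Sum>x\<in>SM. ?tG x)"
  proof (rule sum_mono)
    fix x assume x: "x \<in> SM"
    then have "net_dist ?G i x \<le> net_dist ?M i x" using dist_mono[of ?M i x ?G] unfolding SM_def by auto
    then have "\<delta> ^ (net_dist ?M i x - 1) \<le> \<delta> ^ (net_dist ?G i x - 1)"
      using power_decreasing[of "net_dist ?G i x - 1" "net_dist ?M i x - 1" \<delta>] dpos dle by auto
    then show "?tM x \<le> ?tG x" using bpos[of x] x unfolding SM_def by (auto intro: mult_right_mono)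
  qed
  define D where "D = {m. m < N \<and> {i,m} \<in> ?M}"
  have DG: "{m. m < N \<and> {i,m} \<in> ?G} = insert j D"
    unfolding D_def using ij by (auto simp: doubleton_eq_iff)
  have jD: "j \<notin> D" unfolding D_def by auto
  have fD: "finite D" unfolding D_def by auto
  have "pay False K ?G i = (\<Sum>x\<in>SG. ?tG x) - c * real (card (insert j D))"
    unfolding pay_def exp_payoff_def net_degree_def SG_def DG[symmetric] by simp
  also have "\<dots> = (\<Sum>x\<in>SG. ?tG x) - c * real (card D) - c"
    using fD jD by (simp add: algebra_simps)
  finally have pG: "pay False K ?G i = (\<Sum>x\<in>SG. ?tG x) - c * real (card D) - c" .
  have pM: "pay False K ?M i = (\<Sum>x\<in>SM. ?tM x) - c * real (card D)"
    unfolding pay_def exp_payoff_def net_degree_def SM_def D_def by simp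
  show ?thesis using pG pM s1 s2 s3 bc by linarith
qed


lemma acc_True_indep: "acc True K g a b = acc True K' g a b"
  unfolding acc_def using pay_True_indep by metis

lemma A1:
  assumes "informed K (g \<union> {{a,b}}) a"
  shows "acc False K g a b = acc True K' g a b"
proof -
  have "pay False K (g - {{a,b}}) a = pay True K' (g - {{a,b}}) a"
    by (rule pay_inf[OF assms]) auto
  moreover have "pay False K (g \<union> {{a,b}}) a = pay True K' (g \<union> {{a,b}}) a"
    by (rule pay_inf[OF assms]) auto
  ultimately show ?thesis unfolding acc_def by simp
qed

lemma A2:
  assumes Ec: "c \<le> E" and gd: "good g" and cp: "conn_pairs N g \<subseteq> K"
    and ab: "a \<noteq> b" "a < N" "b < N" and ni: "\<not> informed K (g \<union> {{a,b}}) a"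
  shows "acc False K g a b"
proof -
  have "conn_pairs N (g - {{a,b}}) \<subseteq> K" using conn_pairs_mono[of "g - {{a,b}}" g N] cp by auto
  moreover have "good (g - {{a,b}})" using good_mono gd by blast
  ultimately show ?thesis unfolding acc_def using H_lb Ec ab ni by blast
qed

lemma A3:
  assumes Ec: "c \<le> E" and gd: "good g" and cp: "conn_pairs N g \<subseteq> K"
    and ab: "a \<noteq> b" "a < N" "b < N" and ac: "acc True K' g a b"
  shows "acc False K g a b"
  using A1 A2[OF Ec gd cp ab] ac by blast

lemma A4:
  assumes Ec: "c \<le> E" and gd: "good g" and cp: "conn_pairs N g \<subseteq> K"
    and ab: "a \<noteq> b" "a < N" "b < N" and KK: "K \<subseteq> K2" and ac: "acc False K2 g a b"
  shows "acc False K g a b"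
proof (cases "informed K (g \<union> {{a,b}}) a")
  case True
  then have "informed K2 (g \<union> {{a,b}}) a" using informed_mono KK by blast
  then show ?thesis using A1[OF True] A1 ac by blast
next
  case False
  then show ?thesis using A2[OF Ec gd cp ab] by blast
qed

lemma step_eq:
  "step ci N f c \<delta> E kappa (g,K) (i,j) =
    (let g' = if acc ci K g i j \<and> acc ci K g j i then g \<union> {{i,j}} else g - {{i,j}}
     in (g', K \<union> conn_pairs N g'))"
proof -
  have sw: "{j,i} = {i,j}" by auto
  show ?thesis unfolding step_def acc_def pay_def Let_def sw by simp
qed

lemma acc_base:
  "g1 \<union> {{a,b}} = g \<union> {{a,b}} \<Longrightarrow> g1 - {{a,b}} = g - {{a,b}} \<Longrightarrow> acc ci K g1 a b = acc ci K g a b"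
  unfolding acc_def by simp

lemma step_True:
  "fst (step True N f c \<delta> E kappa (g,K) (i,j)) =
     (if acc True {} g i j \<and> acc True {} g j i then g \<union> {{i,j}} else g - {{i,j}})"
proof -
  have "acc True K g i j = acc True {} g i j" "acc True K g j i = acc True {} g j i"
    using acc_True_indep by blast+
  then show ?thesis unfolding step_eq Let_def by simp
qed

lemma good_new:
  assumes gd: "good g" and ac: "acc True K g a b" and ab: "a \<noteq> b" "a < N" "b < N"
  shows "c \<le> f (kappa b)"
proof (cases "\<exists>e\<in>g. b \<in> e")
  case True
  then show ?thesis using gd unfolding good_def by blast
next
  case False
  then have iso: "\<forall>e\<in>g. b \<notin> e" by blast
  have "g - {{a,b}} = g" using iso by auto
  then have "pay True K g a \<le> pay True K (g \<union> {{a,b}}) a" using ac unfolding acc_def by simp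
  moreover have "pay True K (g \<union> {{a,b}}) a = pay True K g a + f (kappa b) - c"
    using pendant_pay[OF iso ab] unfolding belief_val_def by simp
  ultimately show ?thesis by simp
qed

lemma good_step:
  assumes gd: "good g" and ij: "i \<noteq> j" "i < N" "j < N"
  shows "good (fst (step True N f c \<delta> E kappa (g,K) (i,j)))"
proof (cases "acc True {} g i j \<and> acc True {} g j i")
  case True
  have "c \<le> f (kappa j)" using good_new[OF gd _ ij] True by blast
  moreover have "c \<le> f (kappa i)" using good_new[OF gd _ ij(1)[symmetric] ij(3) ij(2)] True by blast
  ultimately have "good (g \<union> {{i,j}})" using gd unfolding good_def by auto
  then show ?thesis using True step_True by simp
next
  case False
  then show ?thesis using step_True good_mono[OF _ gd, of "g - {{i,j}}"] by auto
qed


lemma two_step: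
  assumes Ec: "c \<le> E" and gd: "good g" and cp: "conn_pairs N g \<subseteq> K" and ij: "i \<noteq> j" "i < N" "j < N"
  shows "\<exists>K2. step False N f c \<delta> E kappa (step False N f c \<delta> E kappa (g,K) (i,j)) (i,j) =
     (fst (step True N f c \<delta> E kappa (g,K0) (i,j)), K2) \<and> K \<subseteq> K2 \<and>
     conn_pairs N (fst (step True N f c \<delta> E kappa (g,K0) (i,j))) \<subseteq> K2 \<and>
     ((acc False K2 g i j \<and> acc False K2 g j i) = (acc True {} g i j \<and> acc True {} g j i))"
proof -
  let ?G = "g \<union> {{i,j}}"
  let ?M = "g - {{i,j}}"
  have sw: "{j,i} = {i,j}" by auto
  have ji: "j \<noteq> i" using ij by auto
  define dC where "dC = (acc True {} g i j \<and> acc True {} g j i)"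
  define d1 where "d1 = (acc False K g i j \<and> acc False K g j i)"
  define g1 where "g1 = (if d1 then ?G else ?M)"
  define K1 where "K1 = K \<union> conn_pairs N g1"
  have s1: "step False N f c \<delta> E kappa (g,K) (i,j) = (g1,K1)"
    unfolding step_eq Let_def g1_def K1_def d1_def by simp
  have claim: "(acc False K' g i j \<and> acc False K' g j i) = dC" if "K1 \<subseteq> K'" for K'
  proof (cases d1)
    case True
    then have "conn_pairs N ?G \<subseteq> K'" using that unfolding K1_def g1_def by auto
    then have "informed K' ?G i" "informed K' (g \<union> {{j,i}}) j" using informed_conn ij sw by auto
    then show ?thesis unfolding dC_def using A1 by blast
  next
    case False
    have KK: "K \<subseteq> K'" using that K1_def by auto
    have "\<not> dC" using False A3[OF Ec gd cp ij] A3[OF Ec gd cp ji ij(3) ij(2)]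
      unfolding d1_def dC_def by blast
    moreover have "\<not> (acc False K' g i j \<and> acc False K' g j i)"
      using False A4[OF Ec gd cp ij KK] A4[OF Ec gd cp ji ij(3) ij(2) KK] unfolding d1_def by blast
    ultimately show ?thesis by blast
  qed
  have b1: "g1 \<union> {{i,j}} = ?G" "g1 - {{i,j}} = ?M" unfolding g1_def by auto
  have b2: "g1 \<union> {{j,i}} = g \<union> {{j,i}}" "g1 - {{j,i}} = g - {{j,i}}" using b1 sw by auto
  have a1: "acc False K1 g1 i j = acc False K1 g i j" "acc False K1 g1 j i = acc False K1 g j i"
    using acc_base b1 b2 by blast+
  define g2 where "g2 = (if dC then ?G else ?M)"
  have eqC: "fst (step True N f c \<delta> E kappa (g,K0) (i,j)) = g2"
    unfolding g2_def dC_def by (rule step_True)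
  have s2: "step False N f c \<delta> E kappa (g1,K1) (i,j) = (g2, K1 \<union> conn_pairs N g2)"
    unfolding step_eq Let_def a1 g2_def using claim[of K1] b1 by simp
  show ?thesis
  proof (intro exI conjI)
    show "step False N f c \<delta> E kappa (step False N f c \<delta> E kappa (g,K) (i,j)) (i,j) =
      (fst (step True N f c \<delta> E kappa (g,K0) (i,j)), K1 \<union> conn_pairs N g2)"
      using s1 s2 eqC by simp
    show "K \<subseteq> K1 \<union> conn_pairs N g2" unfolding K1_def by auto
    show "conn_pairs N (fst (step True N f c \<delta> E kappa (g,K0) (i,j))) \<subseteq> K1 \<union> conn_pairs N g2"
      using eqC by auto
    show "(acc False (K1 \<union> conn_pairs N g2) g i j \<and> acc False (K1 \<union> conn_pairs N g2) g j i) =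
      (acc True {} g i j \<and> acc True {} g j i)" using claim[of "K1 \<union> conn_pairs N g2"] dC_def by auto
  qed
qed


definition dbl :: "(nat \<times> nat) list \<Rightarrow> (nat \<times> nat) list" where
  "dbl L = concat (map (\<lambda>p. [p,p]) L)"

lemma dbl_simps[simp]: "dbl [] = []" "dbl (p # L) = p # p # dbl L"
  unfolding dbl_def by simp_all

lemma valid_dbl: "valid_path N (dbl L) = valid_path N L"
  unfolding valid_path_def dbl_def by auto

lemma run_from_Cons: "run_from ci N f c \<delta> E kappa s (p # L) = run_from ci N f c \<delta> E kappa (step ci N f c \<delta> E kappa s p) L"
  unfolding run_from_def by simp

lemma run_from_Nil: "run_from ci N f c \<delta> E kappa s [] = s"
  unfolding run_from_def by simp

lemma sim:
  assumes Ec: "c \<le> E"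
  shows "valid_path N \<gamma> \<Longrightarrow> good g \<Longrightarrow> conn_pairs N g \<subseteq> K \<Longrightarrow>
    \<exists>K'. run_from False N f c \<delta> E kappa (g,K) (dbl \<gamma>) = (fst (run_from True N f c \<delta> E kappa (g,K0) \<gamma>), K')
      \<and> good (fst (run_from True N f c \<delta> E kappa (g,K0) \<gamma>))
      \<and> conn_pairs N (fst (run_from True N f c \<delta> E kappa (g,K0) \<gamma>)) \<subseteq> K'"
proof (induction \<gamma> arbitrary: g K K0)
  case Nil
  then show ?case by (simp add: run_from_Nil)
next
  case (Cons p \<gamma>)
  obtain i j where p: "p = (i,j)" by fastforce
  have ij: "i \<noteq> j" "i < N" "j < N" and vg: "valid_path N \<gamma>"
    using Cons.prems(1) p unfolding valid_path_def by auto
  obtain g1 K01 where st: "step True N f c \<delta> E kappa (g,K0) (i,j) = (g1,K01)" by fastforce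
  obtain K2 where K2: "step False N f c \<delta> E kappa (step False N f c \<delta> E kappa (g,K) (i,j)) (i,j) = (g1, K2)"
    "conn_pairs N g1 \<subseteq> K2"
    using two_step[OF Ec Cons.prems(2) Cons.prems(3) ij, of K0] st by auto
  have gd1: "good g1" using good_step[OF Cons.prems(2) ij, of K0] st by simp
  obtain K' where K': "run_from False N f c \<delta> E kappa (g1,K2) (dbl \<gamma>) = (fst (run_from True N f c \<delta> E kappa (g1,K01) \<gamma>), K')"
      "good (fst (run_from True N f c \<delta> E kappa (g1,K01) \<gamma>))"
      "conn_pairs N (fst (run_from True N f c \<delta> E kappa (g1,K01) \<gamma>)) \<subseteq> K'"
    using Cons.IH[OF vg gd1 K2(2)] by blast
  show ?case using K' K2(1) st p by (simp add: run_from_Cons)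
qed

lemma pass:
  assumes Ec: "c \<le> E" and gd: "good g"
  shows "valid_path N L \<Longrightarrow> (\<forall>p\<in>set L. fst (step True N f c \<delta> E kappa (g,{}) p) = g) \<Longrightarrow>
    conn_pairs N g \<subseteq> K \<Longrightarrow>
    \<exists>K'. run_from False N f c \<delta> E kappa (g,K) (dbl L) = (g,K') \<and> K \<subseteq> K' \<and>
      (\<forall>(i,j)\<in>set L. (acc False K' g i j \<and> acc False K' g j i) = (acc True {} g i j \<and> acc True {} g j i))"
proof (induction L arbitrary: K)
  case Nil
  then show ?case by (simp add: run_from_Nil)
next
  case (Cons p L)
  obtain i j where p: "p = (i,j)" by fastforce
  have ij: "i \<noteq> j" "i < N" "j < N" and vg: "valid_path N L"
    using Cons.prems(1) p unfolding valid_path_def by auto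
  have ji: "j \<noteq> i" using ij by auto
  have CS: "fst (step True N f c \<delta> E kappa (g,{}) (i,j)) = g" using Cons.prems(2) p by auto
  obtain K2 where K2: "step False N f c \<delta> E kappa (step False N f c \<delta> E kappa (g,K) (i,j)) (i,j) = (g, K2)"
    "K \<subseteq> K2" "conn_pairs N g \<subseteq> K2"
    "(acc False K2 g i j \<and> acc False K2 g j i) = (acc True {} g i j \<and> acc True {} g j i)"
    using two_step[OF Ec gd Cons.prems(3) ij, of "{}"] CS by auto
  obtain K' where K': "run_from False N f c \<delta> E kappa (g,K2) (dbl L) = (g,K')" "K2 \<subseteq> K'"
    "\<forall>(i,j)\<in>set L. (acc False K' g i j \<and> acc False K' g j i) = (acc True {} g i j \<and> acc True {} g j i)"
    using Cons.IH[OF vg _ K2(3)] Cons.prems(2) by auto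
  have cpK': "conn_pairs N g \<subseteq> K'" using K2(3) K'(2) by auto
  have "(acc False K' g i j \<and> acc False K' g j i) = (acc True {} g i j \<and> acc True {} g j i)"
    using A4[OF Ec gd K2(3) ij K'(2)] A4[OF Ec gd K2(3) ji ij(3) ij(2) K'(2)]
      A3[OF Ec gd cpK' ij] A3[OF Ec gd cpK' ji ij(3) ij(2)] K2(4) by blast
  then show ?case using K' K2 p by (auto simp: run_from_Cons)
qed

lemma stable_run:
  assumes "\<And>i j. i \<noteq> j \<Longrightarrow> i < N \<Longrightarrow> j < N \<Longrightarrow> step ci N f c \<delta> E kappa s (i,j) = s"
  shows "valid_path N L \<Longrightarrow> run_from ci N f c \<delta> E kappa s L = s"
proof (induction L)
  case Nil
  then show ?case by (simp add: run_from_Nil)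
next
  case (Cons p L)
  obtain i j where p: "p = (i,j)" by fastforce
  have "i \<noteq> j" "i < N" "j < N" "valid_path N L"
    using Cons.prems(1) p unfolding valid_path_def by auto
  then show ?case using Cons.IH assms p by (simp add: run_from_Cons)
qed

lemma part1_step:
  assumes Ec: "E < c" and ij: "i \<noteq> j" "i < N" "j < N"
  shows "step False N f c \<delta> E kappa ({},{}) (i,j) = ({},{})"
proof -
  have iso: "\<forall>e\<in>{}. j \<notin> e" by simp
  have "pay False {} ({} \<union> {{i,j}}) i = pay False {} {} i + belief_val False f E kappa {} i j - c"
    by (rule pendant_pay[OF iso ij])
  then have "\<not> acc False {} {} i j" unfolding acc_def belief_val_def using Ec by simp
  then show ?thesis unfolding step_eq Let_def by (simp add: conn_pairs_empty)
qed

end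


theorem theorem1:
  fixes N :: nat and H :: "'x measure" and f :: "'x \<Rightarrow> real"
    and c \<delta> :: real and kappa :: "nat \<Rightarrow> 'x"
  assumes "N \<ge> 2"
    and "prob_space H"
    and "\<forall>x\<in>space H. f x > 0"
    and "integrable H f"
    and "c > 0" and "0 < \<delta>" and "\<delta> < 1"
    and "\<forall>i<N. kappa i \<in> space H"
  shows "((integral\<^sup>L H f) < c \<longrightarrow>
            emerge False N f c \<delta> (integral\<^sup>L H f) kappa = {{}} \<and>
            converge False N f c \<delta> (integral\<^sup>L H f) kappa = {{}})
       \<and> ((integral\<^sup>L H f) \<ge> c \<longrightarrow>
            emerge True N f c \<delta> (integral\<^sup>L H f) kappa \<subseteq> emerge False N f c \<delta> (integral\<^sup>L H f) kappa \<and>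
            converge True N f c \<delta> (integral\<^sup>L H f) kappa \<subseteq> converge False N f c \<delta> (integral\<^sup>L H f) kappa)"
proof -
  let ?E = "integral\<^sup>L H f"
  interpret netw N f c \<delta> ?E kappa
    by unfold_locales (use assms in auto)
  have P1: "?E < c \<longrightarrow> emerge False N f c \<delta> ?E kappa = {{}} \<and> converge False N f c \<delta> ?E kappa = {{}}"
  proof
    assume Ec: "?E < c"
    have st: "\<And>i j. i \<noteq> j \<Longrightarrow> i < N \<Longrightarrow> j < N \<Longrightarrow> step False N f c \<delta> ?E kappa ({},{}) (i,j) = ({},{})"
      using part1_step[OF Ec] by blast
    have run: "\<And>\<gamma>. valid_path N \<gamma> \<Longrightarrow> run False N f c \<delta> ?E kappa \<gamma> = ({},{})"
      unfolding run_def using stable_run[OF st] by blast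
    have stab: "net_stable False N f c \<delta> ?E kappa ({},{})"
      unfolding net_stable_def using stable_run[OF st] by auto
    have v0: "valid_path N []" unfolding valid_path_def by simp
    have r0: "run False N f c \<delta> ?E kappa [] = ({},{})" unfolding run_def run_from_def by simp
    have "emerge False N f c \<delta> ?E kappa = {{}}"
    proof
      show "emerge False N f c \<delta> ?E kappa \<subseteq> {{}}" unfolding emerge_def using run by auto
      show "{{}} \<subseteq> emerge False N f c \<delta> ?E kappa" unfolding emerge_def using v0 r0
        by (auto intro!: exI[of _ "[]"])
    qed
    moreover have "converge False N f c \<delta> ?E kappa = {{}}"
    proof
      show "converge False N f c \<delta> ?E kappa \<subseteq> {{}}" unfolding converge_def using run by auto
      show "{{}} \<subseteq> converge False N f c \<delta> ?E kappa" unfolding converge_def using v0 r0 stab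
        by (auto intro!: exI[of _ "[]"])
    qed
    ultimately show "emerge False N f c \<delta> ?E kappa = {{}} \<and> converge False N f c \<delta> ?E kappa = {{}}" ..
  qed
  have P2: "?E \<ge> c \<longrightarrow> emerge True N f c \<delta> ?E kappa \<subseteq> emerge False N f c \<delta> ?E kappa \<and>
            converge True N f c \<delta> ?E kappa \<subseteq> converge False N f c \<delta> ?E kappa"
  proof
    assume Ec: "c \<le> ?E"
    have base: "good {}" "conn_pairs N {} \<subseteq> {}" by (simp_all add: good_def conn_pairs_empty)
    have em: "emerge True N f c \<delta> ?E kappa \<subseteq> emerge False N f c \<delta> ?E kappa"
    proof
      fix g assume "g \<in> emerge True N f c \<delta> ?E kappa"
      then obtain \<gamma> where \<gamma>: "valid_path N \<gamma>" "g = fst (run True N f c \<delta> ?E kappa \<gamma>)"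
        unfolding emerge_def by auto
      obtain K' where "run_from False N f c \<delta> ?E kappa ({},{}) (dbl \<gamma>) =
          (fst (run_from True N f c \<delta> ?E kappa ({},{}) \<gamma>), K')"
        using sim[OF Ec \<gamma>(1) base, of "{}"] by blast
      then have "g = fst (run False N f c \<delta> ?E kappa (dbl \<gamma>))" using \<gamma> unfolding run_def by simp
      moreover have "valid_path N (dbl \<gamma>)" using \<gamma>(1) valid_dbl by blast
      ultimately show "g \<in> emerge False N f c \<delta> ?E kappa" unfolding emerge_def by blast
    qed
    have cv: "converge True N f c \<delta> ?E kappa \<subseteq> converge False N f c \<delta> ?E kappa"
    proof
      fix g assume "g \<in> converge True N f c \<delta> ?E kappa"
      then obtain \<gamma> where \<gamma>: "valid_path N \<gamma>" "g = fst (run True N f c \<delta> ?E kappa \<gamma>)"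
          "net_stable True N f c \<delta> ?E kappa (run True N f c \<delta> ?E kappa \<gamma>)"
        unfolding converge_def by auto
      obtain K0 where rT: "run True N f c \<delta> ?E kappa \<gamma> = (g,K0)" using \<gamma>(2) by (metis prod.collapse)
      obtain K' where rF: "run_from False N f c \<delta> ?E kappa ({},{}) (dbl \<gamma>) = (g, K')" "good g"
          "conn_pairs N g \<subseteq> K'"
        using sim[OF Ec \<gamma>(1) base, of "{}"] rT unfolding run_def by auto
      define P where "P = [(i,j). i \<leftarrow> [0..<N], j \<leftarrow> [0..<N], i \<noteq> j]"
      have setP: "set P = {(i,j). i < N \<and> j < N \<and> i \<noteq> j}" unfolding P_def by auto
      have vP: "valid_path N P" unfolding valid_path_def setP by auto
      have CS1: "fst (step True N f c \<delta> ?E kappa (g,{}) (i,j)) = g" if "i \<noteq> j" "i < N" "j < N" for i j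
      proof -
        have "valid_path N [(i,j)]" using that unfolding valid_path_def by auto
        then have "fst (run_from True N f c \<delta> ?E kappa (g,K0) [(i,j)]) = g"
          using \<gamma>(3) rT unfolding net_stable_def by auto
        then have "fst (step True N f c \<delta> ?E kappa (g,K0) (i,j)) = g" by (simp add: run_from_def)
        then show ?thesis using step_True[of g K0 i j] step_True[of g "{}" i j] by simp
      qed
      have CS: "\<forall>p\<in>set P. fst (step True N f c \<delta> ?E kappa (g,{}) p) = g"
        using CS1 setP by auto
      obtain Kf where Kf: "run_from False N f c \<delta> ?E kappa (g,K') (dbl P) = (g,Kf)" "K' \<subseteq> Kf"
          "\<forall>(i,j)\<in>set P. (acc False Kf g i j \<and> acc False Kf g j i) = (acc True {} g i j \<and> acc True {} g j i)"
        using pass[OF Ec rF(2) vP CS rF(3)] by blast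
      have fix1: "step False N f c \<delta> ?E kappa (g,Kf) (i,j) = (g,Kf)" if "i \<noteq> j" "i < N" "j < N" for i j
      proof -
        have "(i,j) \<in> set P" using setP that by auto
        then have eq: "(acc False Kf g i j \<and> acc False Kf g j i) = (acc True {} g i j \<and> acc True {} g j i)"
          using Kf(3) by auto
        have "(if acc True {} g i j \<and> acc True {} g j i then g \<union> {{i,j}} else g - {{i,j}}) = g"
          using CS1[OF that] step_True[of g "{}" i j] by simp
        then have g': "(if acc False Kf g i j \<and> acc False Kf g j i then g \<union> {{i,j}} else g - {{i,j}}) = g"
          using eq by simp
        have "conn_pairs N g \<subseteq> Kf" using rF(3) Kf(2) by auto
        then show ?thesis unfolding step_eq Let_def g' by auto
      qed
      have stab: "net_stable False N f c \<delta> ?E kappa (g,Kf)"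
        unfolding net_stable_def using stable_run[OF fix1] by auto
      have rr: "run False N f c \<delta> ?E kappa (dbl \<gamma> @ dbl P) = (g,Kf)"
        using rF(1) Kf(1) unfolding run_def run_from_def by simp
      have vv: "valid_path N (dbl \<gamma> @ dbl P)"
        using \<gamma>(1) vP valid_dbl unfolding valid_path_def by auto
      show "g \<in> converge False N f c \<delta> ?E kappa"
      proof -
        have "g = fst (run False N f c \<delta> ?E kappa (dbl \<gamma> @ dbl P))" using rr by simp
        then show ?thesis unfolding converge_def using vv stab rr by (intro CollectI exI[of _ "dbl \<gamma> @ dbl P"]) auto
      qed
    qed
    show "emerge True N f c \<delta> ?E kappa \<subseteq> emerge False N f c \<delta> ?E kappa \<and>
            converge True N f c \<delta> ?E kappa \<subseteq> converge False N f c \<delta> ?E kappa" using em cv ..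
  qed
  show ?thesis using P1 P2 by blast
qed

end
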